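(* Let $\mathcal{A}\colon\mathbb{S}^n\to\mathbb{R}^p$ and $\mathcal{B}\colon\mathbb{S}^n\to\mathbb{R}^q$ be linear, $a\in\mathbb{R}^p$, $b\in\mathbb{R}^q$, and $\mathcal{C}:=\{X\in\mathbb{S}^n_+ : \mathcal{A}(X)=a,\ \mathcal{B}(X)\le b\}$. Suppose $\mathcal{C}\cap\mathbb{S}^n_{++}\neq\emptyset$. Let $\bar X\in\mathcal{C}$ and let $P$ denote the orthogonal projection of $\mathbb{R}^q$ onto $\{z\in\mathbb{R}^q : \operatorname{supp}(z)\cap\operatorname{supp}(\mathcal{B}(\bar X)-b)=\emptyset\}$. Then \[ \dim N_{\mathcal{C}}(\bar X) = \dim(\mathbb{S}^n) - \dim\Bigl(\operatorname{Null}(\mathcal{A})\cap\operatorname{Null}(P\circ\mathcal{B})\cap \operatorname{span}\{\tfrac12(\bar X uv^{\mathsf T}+vu^{\mathsf T}\bar X) : u,v\in\mathbb{R}^n\}\Bigr). \] In particular, if $\bar X=\bar x\bar x^{\mathsf T}$ for some nonzero $\bar x\in\mathbb{R}^n$, then, with $A_i:=\mathcal{A}^*(e_i)$ for $i\in[p]$ and $B_i:=\mathcal{B}^*(e_i)$ for $i\in[q]$, \[ \dim N_{\mathcal{C}}(\bar x\bar x^{\mathsf T}) = \dim(\mathbb{S}^n) - \dim\Bigl(\bigl(\{A_i\bar x : i\in[p]\}\cup\{B_i\bar x : i\in[q]\setminus\operatorname{supp}(\mathcal{B}(\bar x\bar x^{\mathsf T})-b)\}\bigr)^{\perp}\Bigr);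 \] thus $\bar x\bar x^{\mathsf T}\in\mathcal{C}$ is a vertex of $\mathcal{C}$ if and only if $\{A_i\bar x : i\in[p]\}\cup\{B_i\bar x : i\in[q]\setminus\operatorname{supp}(\mathcal{B}(\bar x\bar x^{\mathsf T})-b)\}$ spans $\mathbb{R}^n$.
   Context: $\mathbb{S}^n$ is the space of real symmetric $n\times n$ matrices with trace inner product; $\mathbb{S}^n_+$, $\mathbb{S}^n_{++}$ are the positive semidefinite and positive definite cones. $\operatorname{supp}(z)=\{i:z_i\neq0\}$; $e_i$ are standard basis vectors. For a convex set $\mathcal{C}$ and $\bar X\in\mathcal{C}$, $N_{\mathcal{C}}(\bar X):=\{C\in\mathbb{S}^n : \langle C,X\rangle\le\langle C,\bar X\rangle\ \forall X\in\mathcal{C}\}$; $\bar X$ is a vertex of $\mathcal{C}$ if $\dim N_{\mathcal{C}}(\bar X)=\dim\mathbb{S}^n$. *)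

theory Defs
  imports "HOL-Analysis.Analysis"
begin

definition symm :: "(real^'n^'n) set" where
  "symm = {X. transpose X = X}"

definition tr_inner :: "real^'n^'n \<Rightarrow> real^'n^'n \<Rightarrow> real" where
  "tr_inner C X = trace (C ** X)"

definition psd :: "real^'n^'n \<Rightarrow> bool" where
  "psd X \<longleftrightarrow> X \<in> symm \<and> (\<forall>v. 0 \<le> v \<bullet> (X *v v))"

definition pd :: "real^'n^'n \<Rightarrow> bool" where
  "pd X \<longleftrightarrow> X \<in> symm \<and> (\<forall>v. v \<noteq> 0 \<longrightarrow> 0 < v \<bullet> (X *v v))"

definition normal_cone :: "(real^'n^'n) set \<Rightarrow> real^'n^'n \<Rightarrow> (real^'n^'n) set" where
  "normal_cone S Xb = {C \<in> symm. \<forall>X\<in>S. tr_inner C X \<le> tr_inner C Xb}"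

definition is_vertex :: "(real^'n^'n) set \<Rightarrow> real^'n^'n \<Rightarrow> bool" where
  "is_vertex S Xb \<longleftrightarrow> Xb \<in> S \<and> dim (normal_cone S Xb) = dim (symm :: (real^'n^'n) set)"

definition supp :: "real^'q \<Rightarrow> 'q set" where
  "supp z = {i. z $ i \<noteq> 0}"

definition orth_proj :: "('a::real_inner) set \<Rightarrow> 'a \<Rightarrow> 'a" where
  "orth_proj V z = (THE w. w \<in> V \<and> (\<forall>v\<in>V. (z - w) \<bullet> v = 0))"

definition outer :: "real^'n \<Rightarrow> real^'n \<Rightarrow> real^'n^'n" where
  "outer u v = (\<chi> i j. u $ i * v $ j)"

text \<open>Adjoint of a linear map from the symmetric matrices (trace inner product) to R^p,
  applied to the unit vector e_i: the unique symmetric M with <M,X> = A(X)_i for all X in S^n.\<close>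
definition sadj :: "(real^'n^'n \<Rightarrow> real^'p) \<Rightarrow> 'p \<Rightarrow> real^'n^'n" where
  "sadj A i = (THE M. M \<in> symm \<and> (\<forall>X\<in>symm. tr_inner M X = A X $ i))"

definition feas :: "(real^'n^'n \<Rightarrow> real^'p) \<Rightarrow> real^'p \<Rightarrow> (real^'n^'n \<Rightarrow> real^'q) \<Rightarrow> real^'q
    \<Rightarrow> (real^'n^'n) set" where
  "feas A a B b = {X. psd X \<and> A X = a \<and> (\<forall>i. B X $ i \<le> b $ i)}"

definition orth_compl :: "('a::real_inner) set \<Rightarrow> 'a set" where
  "orth_compl W = {y. \<forall>w\<in>W. w \<bullet> y = 0}"

end

theory Submission
  imports Defs
begin


lemma inner_mat: "(X::real^'n^'n) \<bullet> Y = (\<Sum>i\<in>UNIV. \<Sum>j\<in>UNIV. X$i$j * Y$i$j)"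
  by (simp add: inner_vec_def)

lemma symm_entry: "X \<in> symm \<Longrightarrow> X$j$i = X$i$j"
  unfolding symm_def transpose_def by (auto simp: vec_eq_iff)

lemma symmI: "(\<And>i j. X$j$i = X$i$j) \<Longrightarrow> X \<in> symm"
  unfolding symm_def transpose_def by (simp add: vec_eq_iff)

lemma tr_inner_symm: assumes "C \<in> symm" shows "tr_inner C X = C \<bullet> (X::real^'n^'n)"
proof -
  have "tr_inner C X = (\<Sum>i\<in>UNIV. \<Sum>k\<in>UNIV. C$i$k * X$k$i)"
    by (simp add: tr_inner_def trace_def matrix_matrix_mult_def)
  also have "\<dots> = (\<Sum>k\<in>UNIV. \<Sum>i\<in>UNIV. C$i$k * X$k$i)" by (rule sum.swap)
  also have "\<dots> = (\<Sum>k\<in>UNIV. \<Sum>i\<in>UNIV. C$k$i * X$k$i)"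
    by (intro sum.cong refl) (metis assms symm_entry)
  finally show ?thesis by (simp add: inner_mat)
qed



lemma subspace_symm: "subspace symm"
  unfolding subspace_def by (auto intro!: symmI simp: symm_entry)

lemma symm_mv: assumes "X \<in> symm" shows "u \<bullet> (X *v v) = v \<bullet> (X *v (u::real^'n))"
proof -
  have "u \<bullet> (X *v v) = (\<Sum>i\<in>UNIV. \<Sum>j\<in>UNIV. u$i * X$i$j * v$j)"
    by (simp add: inner_vec_def matrix_vector_mult_def sum_distrib_left mult.assoc)
  also have "\<dots> = (\<Sum>j\<in>UNIV. \<Sum>i\<in>UNIV. u$i * X$i$j * v$j)" by (rule sum.swap)
  also have "\<dots> = (\<Sum>j\<in>UNIV. \<Sum>i\<in>UNIV. v$j * X$j$i * u$i)"
    by (intro sum.cong refl) (simp add: symm_entry[OF assms])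
  also have "\<dots> = v \<bullet> (X *v u)"
    by (simp add: inner_vec_def matrix_vector_mult_def sum_distrib_left mult.assoc)
  finally show ?thesis .
qed

lemma outer_inner: "outer u v \<bullet> X = u \<bullet> (X *v (v::real^'n))"
proof -
  have "outer u v \<bullet> X = (\<Sum>i\<in>UNIV. \<Sum>j\<in>UNIV. u$i * (X$i$j * v$j))"
    by (simp add: outer_def inner_mat mult.commute mult.left_commute)
  also have "\<dots> = u \<bullet> (X *v v)"
    by (simp add: inner_vec_def matrix_vector_mult_def sum_distrib_left)
  finally show ?thesis .
qed

lemma outer_symm: "outer w w \<in> symm"
  by (rule symmI) (simp add: outer_def mult.commute)

lemma psd_symm: "psd X \<Longrightarrow> X \<in> symm" by (simp add: psd_def)

lemma feas_psd: "X \<in> feas A a B b \<Longrightarrow> psd X" by (simp add: feas_def)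



lemma orth_proj_supp:
  "orth_proj {z. supp z \<inter> supp c = {}} z = (\<chi> i. if c$i = 0 then z$i else (0::real))"
  (is "orth_proj ?V z = ?w")
proof -
  have wV: "?w \<in> ?V" by (auto simp: supp_def)
  have wo: "\<forall>v\<in>?V. (z - ?w) \<bullet> v = 0"
  proof
    fix v assume "v \<in> ?V"
    then have "\<And>i. c$i \<noteq> 0 \<Longrightarrow> v$i = 0" by (auto simp: supp_def)
    then show "(z - ?w) \<bullet> v = 0" unfolding inner_vec_def
      by (intro sum.neutral) auto
  qed
  have uniq: "w' = ?w" if "w' \<in> ?V" "\<forall>v\<in>?V. (z - w') \<bullet> v = 0" for w'
  proof (subst vec_eq_iff, intro allI)
    fix i
    show "w' $ i = ?w $ i"
    proof (cases "c$i = 0")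
      case True
      have "axis i 1 \<in> ?V" using True by (auto simp: supp_def axis_def)
      then have "(z - w') \<bullet> axis i 1 = 0" using that by blast
      then show ?thesis using True by (simp add: inner_axis)
    next
      case False
      then show ?thesis using that(1) by (auto simp: supp_def)
    qed
  qed
  show ?thesis unfolding orth_proj_def
    by (rule the_equality) (use wV wo uniq in blast)+
qed

lemma orth_proj_zero_iff:
  "orth_proj {z. supp z \<inter> supp c = {}} z = 0 \<longleftrightarrow> (\<forall>i. c$i = 0 \<longrightarrow> z$i = (0::real))"
  by (auto simp: orth_proj_supp vec_eq_iff)

lemma transpose_inner: "transpose F \<bullet> (X::real^'n^'n) = F \<bullet> transpose X"
proof -
  have "transpose F \<bullet> X = (\<Sum>i\<in>UNIV. \<Sum>j\<in>UNIV. F$j$i * X$i$j)"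
    by (simp add: inner_mat transpose_def)
  also have "\<dots> = (\<Sum>j\<in>UNIV. \<Sum>i\<in>UNIV. F$j$i * X$i$j)" by (rule sum.swap)
  also have "\<dots> = F \<bullet> transpose X" by (simp add: inner_mat transpose_def)
  finally show ?thesis .
qed

lemma riesz:
  fixes f :: "'a::euclidean_space \<Rightarrow> real"
  assumes "linear f" shows "\<exists>F. \<forall>x. f x = F \<bullet> x"
proof -
  have "f x = (\<Sum>b\<in>Basis. f b *\<^sub>R b) \<bullet> x" for x
  proof -
    have "f x = f (\<Sum>b\<in>Basis. (x \<bullet> b) *\<^sub>R b)" by (simp add: euclidean_representation)
    also have "\<dots> = (\<Sum>b\<in>Basis. (x \<bullet> b) * f b)"
      using assms by (simp add: linear_sum linear_scale)
    also have "\<dots> = (\<Sum>b\<in>Basis. f b *\<^sub>R b) \<bullet> x"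
      by (simp add: inner_sum_left mult.commute inner_commute inner_sum_right)
    finally show ?thesis .
  qed
  then show ?thesis by blast
qed

lemma adj_ex:
  fixes f :: "real^'n^'n \<Rightarrow> real"
  assumes "linear f" shows "\<exists>M\<in>symm. \<forall>X\<in>symm. M \<bullet> X = f X"
proof -
  obtain F where F: "\<And>X. f X = F \<bullet> X" using riesz[OF assms] by blast
  let ?M = "(1/2) *\<^sub>R (F + transpose F)"
  have "?M \<in> symm" by (rule symmI) (simp add: transpose_def)
  moreover have "?M \<bullet> X = f X" if "X \<in> symm" for X
  proof -
    have "transpose X = X" using that by (simp add: symm_def)
    then have "transpose F \<bullet> X = F \<bullet> X" by (simp add: transpose_inner)
    then show ?thesis by (simp add: F inner_add_left)
  qed
  ultimately show ?thesis by blast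
qed

lemma linear_comp_nth: "linear A \<Longrightarrow> linear (\<lambda>X. A X $ i)"
  unfolding linear_iff by (simp add: linear_add linear_scale)

lemma sadj_prop:
  assumes "linear A"
  shows "sadj A i \<in> symm \<and> (\<forall>X\<in>symm. sadj A i \<bullet> X = A X $ i)"
proof -
  obtain M where M: "M \<in> symm" "\<forall>X\<in>symm. M \<bullet> X = A X $ i"
    using adj_ex[OF linear_comp_nth[OF assms]] by blast
  have P: "M' \<in> symm \<and> (\<forall>X\<in>symm. tr_inner M' X = A X $ i) \<longleftrightarrow>
           M' \<in> symm \<and> (\<forall>X\<in>symm. M' \<bullet> X = A X $ i)" for M'
    by (auto simp: tr_inner_symm)
  have "\<exists>!M. M \<in> symm \<and> (\<forall>X\<in>symm. tr_inner M X = A X $ i)"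
  proof (rule ex1I)
    show "M \<in> symm \<and> (\<forall>X\<in>symm. tr_inner M X = A X $ i)" using M P by blast
  next
    fix M' assume "M' \<in> symm \<and> (\<forall>X\<in>symm. tr_inner M' X = A X $ i)"
    then have M': "M' \<in> symm" "\<forall>X\<in>symm. M' \<bullet> X = A X $ i" using P by blast+
    have "M' - M \<in> symm" by (meson M(1) M'(1) subspace_symm subspace_diff)
    then have "(M' - M) \<bullet> (M' - M) = 0" using M M' by (simp add: inner_diff_left)
    then show "M' = M" by simp
  qed
  from theI'[OF this] show ?thesis unfolding sadj_def using P by blast
qed



lemma mm_add_r: "((A::real^'n^'n) + B) ** C = A ** C + B ** C"
  by (simp add: matrix_matrix_mult_def vec_eq_iff sum.distrib algebra_simps)

lemma transpose_add: "transpose ((A::real^'n^'n) + B) = transpose A + transpose B"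
  by (simp add: transpose_def vec_eq_iff)

lemma transpose_outer: "transpose (outer u v) = outer v u"
  by (simp add: transpose_def outer_def vec_eq_iff mult.commute)

definition Tset :: "real^'n^'n \<Rightarrow> (real^'n^'n) set" where
  "Tset Xb = {Xb ** M + transpose M ** Xb | M. True}"

lemma subspace_Tset: "subspace (Tset Xb)"
  unfolding subspace_def Tset_def
proof (intro conjI allI ballI impI)
  show "0 \<in> {Xb ** M + transpose M ** Xb |M. True}"
    by (intro CollectI exI[of _ 0]) (simp add: transpose_def vec_eq_iff matrix_matrix_mult_def)
next
  fix x y assume "x \<in> {Xb ** M + transpose M ** Xb |M. True}" "y \<in> {Xb ** M + transpose M ** Xb |M. True}"
  then obtain M1 M2 where "x = Xb ** M1 + transpose M1 ** Xb" "y = Xb ** M2 + transpose M2 ** Xb" by blast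
  then show "x + y \<in> {Xb ** M + transpose M ** Xb |M. True}"
    by (intro CollectI exI[of _ "M1 + M2"])
       (simp add: matrix_add_ldistrib transpose_add mm_add_r algebra_simps)
next
  fix c :: real and x assume "x \<in> {Xb ** M + transpose M ** Xb |M. True}"
  then obtain M1 where "x = Xb ** M1 + transpose M1 ** Xb" by blast
  then show "c *\<^sub>R x \<in> {Xb ** M + transpose M ** Xb |M. True}"
    by (intro CollectI exI[of _ "c *\<^sub>R M1"])
       (simp add: transpose_scalar matrix_scalar_ac scalar_matrix_assoc[symmetric] scaleR_right_distrib)
qed

lemma gen_in_Tset: "(1/2) *\<^sub>R (Xb ** outer u v + outer v u ** Xb) \<in> Tset Xb"
  unfolding Tset_def
  by (intro CollectI exI[of _ "(1/2) *\<^sub>R outer u v"])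
     (simp add: transpose_scalar matrix_scalar_ac scalar_matrix_assoc[symmetric] scaleR_right_distrib transpose_outer)

lemma Tset_decomp:
  "Xb ** M + transpose M ** Xb =
     (\<Sum>k\<in>UNIV. 2 *\<^sub>R ((1/2) *\<^sub>R (Xb ** outer (axis k 1) (M$k) + outer (M$k) (axis k 1) ** Xb)))"
proof -
  have "(Xb ** M + transpose M ** Xb) $ i $ j =
     (\<Sum>k\<in>UNIV. (Xb ** outer (axis k 1) (M$k) + outer (M$k) (axis k 1) ** Xb) $ i $ j)" for i j
    by (simp add: matrix_matrix_mult_def outer_def axis_def transpose_def sum.distrib
        if_distrib if_distribR sum.delta cong: if_cong)
  then show ?thesis by (simp add: vec_eq_iff sum_component)
qed

lemma span_gen_eq:
  "span {(1/2) *\<^sub>R (Xb ** outer u v + outer v u ** Xb) | u v. True} = Tset Xb"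
proof
  show "span {(1/2) *\<^sub>R (Xb ** outer u v + outer v u ** Xb) | u v. True} \<subseteq> Tset Xb"
    by (rule span_minimal) (use gen_in_Tset subspace_Tset in blast)+
next
  show "Tset Xb \<subseteq> span {(1/2) *\<^sub>R (Xb ** outer u v + outer v u ** Xb) | u v. True}"
  proof
    fix Y assume "Y \<in> Tset Xb"
    then obtain M where Y: "Y = Xb ** M + transpose M ** Xb" by (auto simp: Tset_def)
    show "Y \<in> span {(1/2) *\<^sub>R (Xb ** outer u v + outer v u ** Xb) | u v. True}"
      unfolding Y Tset_decomp
      by (intro span_sum span_mul span_base) blast
  qed
qed



lemma subspace_null: "subspace {w. (X::real^'n^'n) *v w = 0}"
  unfolding subspace_def by (simp add: matrix_vector_right_distrib matrix_vector_mult_scaleR)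

lemma mm_diff_l: "(A::real^'n^'n) ** (B - C) = A ** B - A ** C"
  by (simp add: matrix_matrix_mult_def vec_eq_iff sum_subtractf algebra_simps)

lemma mm_diff_r: "((A::real^'n^'n) - B) ** C = A ** C - B ** C"
  by (simp add: matrix_matrix_mult_def vec_eq_iff sum_subtractf algebra_simps)

lemma mm_scale_r: "(A::real^'n^'n) ** (k *\<^sub>R B) = k *\<^sub>R (A ** B)"
  by (simp add: matrix_scalar_ac scalar_matrix_assoc)

lemma mm_scale_l: "(k *\<^sub>R (A::real^'n^'n)) ** B = k *\<^sub>R (A ** B)"
  by (simp add: scalar_matrix_assoc)

lemma transpose_diff: "transpose ((A::real^'n^'n) - B) = transpose A - transpose B"
  by (simp add: transpose_def vec_eq_iff)

lemma vec_alg: "(y::'a::real_vector) = b + d \<Longrightarrow> a - c = d \<Longrightarrow> y = a + (-1/2) *\<^sub>R c + (b + (-1/2) *\<^sub>R c)"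
proof -
  assume "y = b + d" "a - c = d"
  then have "y = b + a - c" by (simp add: algebra_simps)
  moreover have "c = (1/2) *\<^sub>R c + (1/2) *\<^sub>R c" by (simp add: scaleR_add_left[symmetric])
  ultimately show ?thesis by (simp add: algebra_simps)
qed

lemma tangent_char:
  fixes Xb Y :: "real^'n^'n"
  assumes Xs: "Xb \<in> symm" and Ys: "Y \<in> symm"
    and Q: "\<And>w. Xb *v w = 0 \<Longrightarrow> w \<bullet> (Y *v w) = 0"
  shows "Y \<in> Tset Xb"
proof -
  define Nul where "Nul = {w. Xb *v w = 0}"
  have sN: "subspace Nul" unfolding Nul_def by (rule subspace_null)
  have spN: "span Nul = Nul" using sN by simp
  have pol: "w1 \<bullet> (Y *v w2) = 0" if "w1 \<in> Nul" "w2 \<in> Nul" for w1 w2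
  proof -
    have "w1 + w2 \<in> Nul" using sN that by (simp add: subspace_add)
    then have "(w1 + w2) \<bullet> (Y *v (w1 + w2)) = 0" using Q by (simp add: Nul_def)
    moreover have "w1 \<bullet> (Y *v w1) = 0" "w2 \<bullet> (Y *v w2) = 0" using Q that by (auto simp: Nul_def)
    moreover have "w2 \<bullet> (Y *v w1) = w1 \<bullet> (Y *v w2)" using symm_mv[OF Ys] by simp
    ultimately show ?thesis
      by (simp add: matrix_vector_right_distrib inner_add_left inner_add_right)
  qed
  have "\<forall>j. \<exists>pq. fst pq \<in> Nul \<and> (\<forall>w\<in>Nul. snd pq \<bullet> w = 0) \<and> axis j 1 = fst pq + snd pq"
  proof
    fix j :: 'n
    obtain y z where "y \<in> span Nul" "\<And>w. w \<in> span Nul \<Longrightarrow> orthogonal z w" "axis j (1::real) = y + z"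
      using orthogonal_subspace_decomp_exists[of Nul "axis j 1"] by blast
    then show "\<exists>pq. fst pq \<in> Nul \<and> (\<forall>w\<in>Nul. snd pq \<bullet> w = 0) \<and> axis j 1 = fst pq + snd pq"
      by (intro exI[of _ "(y,z)"]) (auto simp: spN orthogonal_def)
  qed
  then obtain pq where pq: "\<And>j. fst (pq j) \<in> Nul" "\<And>j w. w \<in> Nul \<Longrightarrow> snd (pq j) \<bullet> w = 0"
     "\<And>j. axis j 1 = fst (pq j) + snd (pq j)"
    by metis
  define p where "p j = fst (pq j)" for j
  define q where "q j = snd (pq j)" for j
  have pN: "p j \<in> Nul" and qo: "w \<in> Nul \<Longrightarrow> q j \<bullet> w = 0" and pqax: "axis j 1 = p j + q j" for j w
    using pq by (auto simp: p_def q_def)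
  have qrange: "\<exists>g. Xb *v g = q j" for j
  proof -
    let ?W = "range (\<lambda>v. Xb *v v)"
    have sW: "subspace ?W"
      using linear_subspace_image[OF matrix_vector_mul_linear[of Xb] subspace_UNIV] by simp
    obtain y z where yz: "y \<in> span ?W" "\<And>w. w \<in> span ?W \<Longrightarrow> orthogonal z w" "q j = y + z"
      using orthogonal_subspace_decomp_exists[of ?W "q j"] by blast
    have yW: "y \<in> ?W" using yz(1) sW by (metis span_eq_iff)
    have "z \<bullet> (Xb *v u) = 0" for u using yz(2)[of "Xb *v u"] by (auto simp: orthogonal_def span_base)
    then have "(Xb *v z) \<bullet> u = 0" for u using symm_mv[OF Xs] by (metis inner_commute)
    then have "Xb *v z = 0" by (metis inner_eq_zero_iff)
    then have "z \<in> Nul" by (simp add: Nul_def)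
    then have "q j \<bullet> z = 0" by (rule qo)
    moreover have "y \<bullet> z = 0" using yz(2)[of y] yz(1) by (simp add: orthogonal_def inner_commute)
    ultimately have "z \<bullet> z = 0" using yz(3) by (simp add: inner_add_left)
    then have "q j = y" using yz(3) by simp
    then show ?thesis using yW by auto
  qed
  then obtain g where g: "\<And>j. Xb *v g j = q j" by metis
  define Qm where "Qm = (\<chi> i j. q j $ i)"
  define G where "G = (\<chi> i j. g j $ i)"
  have XG: "Xb ** G = Qm"
    by (simp add: Qm_def G_def vec_eq_iff matrix_matrix_mult_def g[symmetric] matrix_vector_mult_def)
  have qsym: "q j $ i = q i $ j" for i j
  proof -
    have "q j $ i = q j \<bullet> axis i 1" by (simp add: inner_axis)
    also have "\<dots> = q j \<bullet> q i" using pqax[of i] qo[OF pN[of i], of j] by (simp add: inner_add_right)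
    also have "\<dots> = q i \<bullet> axis j 1" using pqax[of j] qo[OF pN[of j], of i]
      by (simp add: inner_add_right inner_commute)
    also have "\<dots> = q i $ j" by (simp add: inner_axis)
    finally show ?thesis .
  qed
  have Qs: "transpose Qm = Qm" by (simp add: Qm_def transpose_def vec_eq_iff qsym)
  have GX: "transpose G ** Xb = Qm"
  proof -
    have "transpose Xb = Xb" using Xs by (simp add: symm_def)
    then have "transpose G ** Xb = transpose (Xb ** G)" by (simp add: matrix_transpose_mul)
    then show ?thesis using XG Qs by simp
  qed
  have Ysym: "transpose Y = Y" using Ys by (simp add: symm_def)
  have Xsym: "transpose Xb = Xb" using Xs by (simp add: symm_def)
  have Qv: "(Qm *v z) $ i = q i \<bullet> z" for z i
    by (simp add: matrix_vector_mult_def Qm_def inner_vec_def qsym)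
  have Pv: "v - Qm *v v \<in> Nul" for v
  proof -
    have "v = (\<Sum>j\<in>UNIV. v$j *\<^sub>R axis j 1)"
      using basis_expansion[of v] by (simp add: scalar_mult_eq_scaleR)
    also have "\<dots> = (\<Sum>j\<in>UNIV. v$j *\<^sub>R p j) + (\<Sum>j\<in>UNIV. v$j *\<^sub>R q j)"
      by (simp add: pqax scaleR_right_distrib sum.distrib)
    finally have "v - (\<Sum>j\<in>UNIV. v$j *\<^sub>R q j) = (\<Sum>j\<in>UNIV. v$j *\<^sub>R p j)"
      by (metis add_diff_cancel_right')
    moreover have "Qm *v v = (\<Sum>j\<in>UNIV. v$j *\<^sub>R q j)"
      by (simp add: matrix_mult_sum scalar_mult_eq_scaleR column_def Qm_def)
    moreover have "(\<Sum>j\<in>UNIV. v$j *\<^sub>R p j) \<in> Nul"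
      using sN pN by (intro subspace_sum subspace_scale) auto
    ultimately show ?thesis by simp
  qed
  have QYP: "Qm *v (Y *v (v - Qm *v v)) = Y *v (v - Qm *v v)" for v
  proof (subst vec_eq_iff, intro allI)
    fix i
    let ?z = "Y *v (v - Qm *v v)"
    have "?z $ i = axis i 1 \<bullet> ?z" by (simp add: inner_axis')
    also have "\<dots> = p i \<bullet> ?z + q i \<bullet> ?z" by (simp add: pqax[of i] inner_add_left)
    also have "p i \<bullet> ?z = 0" using pol[OF pN Pv] .
    finally show "(Qm *v ?z) $ i = ?z $ i" by (simp add: Qv)
  qed
  define M where "M = G ** Y + (-1/2) *\<^sub>R (G ** (Y ** Qm))"
  have XM: "Xb ** M = Qm ** Y + (-1/2) *\<^sub>R (Qm ** (Y ** Qm))"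
    by (simp only: M_def matrix_add_ldistrib mm_scale_r matrix_mul_assoc XG)
  have TM: "transpose M ** Xb = Y ** Qm + (-1/2) *\<^sub>R (Qm ** (Y ** Qm))"
  proof -
    have "transpose M = Y ** transpose G + (-1/2) *\<^sub>R ((Qm ** Y) ** transpose G)"
      by (simp only: M_def transpose_add transpose_scalar matrix_transpose_mul Ysym Qs)
    then show ?thesis
      by (simp only: mm_add_r mm_scale_l matrix_mul_assoc[symmetric] GX)
  qed
  have "Y = Xb ** M + transpose M ** Xb"
  proof (subst matrix_eq, intro allI)
    fix v
    have e1: "Y *v v = Y *v (Qm *v v) + Y *v (v - Qm *v v)"
      by (simp add: matrix_vector_mult_diff_distrib)
    have e2: "Qm *v (Y *v v) - Qm *v (Y *v (Qm *v v)) = Y *v (v - Qm *v v)"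
      using QYP[of v] by (simp add: matrix_vector_mult_diff_distrib)
    have "(Xb ** M + transpose M ** Xb) *v v =
          Qm *v (Y *v v) + (-1/2) *\<^sub>R (Qm *v (Y *v (Qm *v v))) +
          (Y *v (Qm *v v) + (-1/2) *\<^sub>R (Qm *v (Y *v (Qm *v v))))"
      unfolding XM TM
      by (simp only: matrix_vector_mult_add_rdistrib scaleR_matrix_vector_assoc[symmetric]
            matrix_vector_mul_assoc[symmetric])
    then show "Y *v v = (Xb ** M + transpose M ** Xb) *v v" using vec_alg[OF e1 e2] by simp
  qed
  then show ?thesis unfolding Tset_def by blast
qed



lemma pd_bound:
  fixes Xs :: "real^'n^'n"
  assumes "pd Xs" shows "\<exists>\<mu>>0. \<forall>v. \<mu> * (v \<bullet> v) \<le> v \<bullet> (Xs *v v)"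
proof -
  let ?S = "sphere (0::real^'n) 1"
  have ne: "?S \<noteq> {}"
  proof -
    obtain k :: 'n where True by blast
    have "axis k (1::real) \<in> ?S" by simp
    then show ?thesis by blast
  qed
  have cont: "continuous_on ?S (\<lambda>v. v \<bullet> (Xs *v v))"
    by (intro continuous_intros linear_continuous_on linear_linear[THEN iffD1] matrix_vector_mul_linear)
  obtain u where u: "u \<in> ?S" "\<And>y. y \<in> ?S \<Longrightarrow> u \<bullet> (Xs *v u) \<le> y \<bullet> (Xs *v y)"
    using continuous_attains_inf[OF compact_sphere ne cont] by blast
  let ?\<mu> = "u \<bullet> (Xs *v u)"
  have "u \<noteq> 0" using u(1) by auto
  then have mpos: "?\<mu> > 0" using assms by (simp add: pd_def)
  have "?\<mu> * (v \<bullet> v) \<le> v \<bullet> (Xs *v v)" for v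
  proof (cases "v = 0")
    case True then show ?thesis by simp
  next
    case False
    let ?w = "(1 / norm v) *\<^sub>R v"
    have "?w \<in> ?S" using False by simp
    then have "?\<mu> \<le> ?w \<bullet> (Xs *v ?w)" by (rule u(2))
    also have "\<dots> = (v \<bullet> (Xs *v v)) / (norm v)^2"
      by (simp add: matrix_vector_mult_scaleR power2_eq_square)
    finally have "?\<mu> * (norm v)^2 \<le> v \<bullet> (Xs *v v)" using False
      by (simp add: pos_le_divide_eq)
    then show ?thesis by (simp add: power2_norm_eq_inner)
  qed
  then show ?thesis using mpos by blast
qed

lemma quad_bound:
  fixes Xb M :: "real^'n^'n"
  shows "\<exists>c\<ge>0. \<forall>v. (M *v v) \<bullet> (Xb *v (M *v v)) \<le> c * (v \<bullet> v)"
proof -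
  obtain K1 where K1: "\<And>x. norm (M *v x) \<le> K1 * norm x"
    using linear_bounded[OF matrix_vector_mul_linear[of M]] by blast
  obtain K2 where K2: "\<And>x. norm (Xb *v x) \<le> K2 * norm x"
    using linear_bounded[OF matrix_vector_mul_linear[of Xb]] by blast
  have "(M *v v) \<bullet> (Xb *v (M *v v)) \<le> (\<bar>K2\<bar> * \<bar>K1\<bar> * \<bar>K1\<bar>) * (v \<bullet> v)" for v
  proof -
    have n1: "norm (M *v v) \<le> \<bar>K1\<bar> * norm v" using K1[of v]
      by (meson abs_ge_self mult_right_mono norm_ge_zero order_trans)
    have n2: "norm (Xb *v (M *v v)) \<le> \<bar>K2\<bar> * norm (M *v v)" using K2[of "M *v v"]
      by (meson abs_ge_self mult_right_mono norm_ge_zero order_trans)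
    have "(M *v v) \<bullet> (Xb *v (M *v v)) \<le> norm (M *v v) * norm (Xb *v (M *v v))"
      by (rule norm_cauchy_schwarz)
    also have "\<dots> \<le> norm (M *v v) * (\<bar>K2\<bar> * norm (M *v v))"
      using n2 by (simp add: mult_left_mono)
    also have "\<dots> = \<bar>K2\<bar> * (norm (M *v v))^2" by (simp add: power2_eq_square)
    also have "\<dots> \<le> \<bar>K2\<bar> * (\<bar>K1\<bar> * norm v)^2"
      using n1 by (intro mult_left_mono power_mono) auto
    also have "\<dots> = (\<bar>K2\<bar> * \<bar>K1\<bar> * \<bar>K1\<bar>) * (v \<bullet> v)"
      by (simp add: power2_eq_square power2_norm_eq_inner[symmetric])
    finally show ?thesis .
  qed
  then show ?thesis by (intro exI[of _ "\<bar>K2\<bar> * \<bar>K1\<bar> * \<bar>K1\<bar>"]) auto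
qed

lemma mtv: "v \<bullet> (transpose M *v w) = (M *v v) \<bullet> (w::real^'n)"
  by (metis dot_lmul_matrix inner_commute transpose_matrix_vector vector_transpose_matrix)

lemma psd_comb:
  fixes Xb Xs M :: "real^'n^'n"
  assumes Xb: "psd Xb" and Xs: "\<forall>v. \<mu> * (v \<bullet> v) \<le> v \<bullet> (Xs *v v)"
    and c: "\<forall>v. (M *v v) \<bullet> (Xb *v (M *v v)) \<le> c * (v \<bullet> v)"
    and e: "\<epsilon> > 0" and d: "\<delta> > 0" and t: "1 - \<epsilon> * \<delta> > 0" and key: "\<epsilon> * c \<le> (1 - \<epsilon> * \<delta>) * \<delta> * \<mu>"
  shows "0 \<le> v \<bullet> ((Xb + \<epsilon> *\<^sub>R ((Xb ** M + transpose M ** Xb) + \<delta> *\<^sub>R (Xs - Xb))) *v v)"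
proof -
  define t where "t = 1 - \<epsilon> * \<delta>"
  have Xbs: "Xb \<in> symm" using Xb by (simp add: psd_def)
  define qv where "qv = v \<bullet> (Xb *v v)"
  define p where "p = v \<bullet> (Xb *v (M *v v))"
  define r where "r = (M *v v) \<bullet> (Xb *v (M *v v))"
  define m where "m = v \<bullet> (Xs *v v)"
  define n2 where "n2 = v \<bullet> v"
  have n2: "n2 \<ge> 0" by (simp add: n2_def)
  have Yv: "v \<bullet> ((Xb ** M + transpose M ** Xb) *v v) = 2 * p"
  proof -
    have "v \<bullet> ((Xb ** M + transpose M ** Xb) *v v) =
          v \<bullet> (Xb *v (M *v v)) + (M *v v) \<bullet> (Xb *v v)"
      by (simp only: matrix_vector_mult_add_rdistrib matrix_vector_mul_assoc[symmetric]
            inner_add_right mtv)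
    also have "(M *v v) \<bullet> (Xb *v v) = v \<bullet> (Xb *v (M *v v))" by (rule symm_mv[OF Xbs])
    finally show ?thesis by (simp add: p_def)
  qed
  have val: "v \<bullet> ((Xb + \<epsilon> *\<^sub>R ((Xb ** M + transpose M ** Xb) + \<delta> *\<^sub>R (Xs - Xb))) *v v)
      = t * qv + 2 * \<epsilon> * p + \<epsilon> * \<delta> * m"
    using Yv by (simp add: t_def qv_def m_def matrix_vector_mult_add_rdistrib
        scaleR_matrix_vector_assoc[symmetric] matrix_vector_mult_diff_rdistrib
        inner_add_right inner_diff_right algebra_simps) (metis distrib_left)
  have psdu: "0 \<le> t^2 * qv + 2 * t * \<epsilon> * p + \<epsilon>^2 * r"
  proof -
    let ?u = "t *\<^sub>R v + \<epsilon> *\<^sub>R (M *v v)"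
    have "0 \<le> ?u \<bullet> (Xb *v ?u)" using Xb by (simp add: psd_def)
    also have "\<dots> = t^2 * qv + t * \<epsilon> * (v \<bullet> (Xb *v (M *v v)) + (M *v v) \<bullet> (Xb *v v)) + \<epsilon>^2 * r"
      by (simp add: qv_def r_def matrix_vector_right_distrib matrix_vector_mult_scaleR
          inner_add_left inner_add_right power2_eq_square algebra_simps)
    also have "(M *v v) \<bullet> (Xb *v v) = p" unfolding p_def by (rule symm_mv[OF Xbs])
    finally show ?thesis by (simp add: p_def algebra_simps)
  qed
  have mb: "\<mu> * n2 \<le> m" using Xs by (simp add: m_def n2_def)
  have rb: "r \<le> c * n2" using c by (simp add: r_def n2_def)
  have tpos: "t > 0" using t by (simp add: t_def)
  have "t * (t * qv + 2 * \<epsilon> * p + \<epsilon> * \<delta> * m) = (t^2 * qv + 2 * t * \<epsilon> * p + \<epsilon>^2 * r) + (t * \<epsilon> * \<delta> * m - \<epsilon>^2 * r)"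
    by (simp add: algebra_simps power2_eq_square)
  moreover have "t * \<epsilon> * \<delta> * (\<mu> * n2) \<le> t * \<epsilon> * \<delta> * m"
    using mb tpos e d by (intro mult_left_mono) auto
  moreover have "\<epsilon>^2 * r \<le> \<epsilon>^2 * (c * n2)" using rb by (intro mult_left_mono) auto
  moreover have "\<epsilon>^2 * (c * n2) \<le> t * \<epsilon> * \<delta> * (\<mu> * n2)"
  proof -
    have "\<epsilon> * c \<le> t * \<delta> * \<mu>" using key by (simp add: t_def)
    then have "\<epsilon> * (\<epsilon> * c) * n2 \<le> \<epsilon> * (t * \<delta> * \<mu>) * n2"
      using e n2 by (intro mult_right_mono mult_left_mono) auto
    then show ?thesis by (simp add: power2_eq_square algebra_simps)
  qed
  ultimately have "0 \<le> t * (t * qv + 2 * \<epsilon> * p + \<epsilon> * \<delta> * m)" using psdu by linarith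
  then have "0 \<le> t * qv + 2 * \<epsilon> * p + \<epsilon> * \<delta> * m" using tpos
    by (simp add: zero_le_mult_iff)
  then show ?thesis using val by simp
qed



lemma feas_dir:
  fixes A :: "real^'n^'n \<Rightarrow> real^'p" and B :: "real^'n^'n \<Rightarrow> real^'q"
  assumes linA: "linear A" and linB: "linear B"
    and XsF: "Xs \<in> feas A a B b" and Xspd: "pd Xs" and XbF: "Xb \<in> feas A a B b"
    and Ys: "Y \<in> symm" and YT: "Y = Xb ** M + transpose M ** Xb"
    and AY: "A Y = 0" and BY: "\<And>i. B Xb $ i = b $ i \<Longrightarrow> B Y $ i = 0"
    and d: "\<delta> > 0"
  shows "\<exists>\<epsilon>>0. Xb + \<epsilon> *\<^sub>R (Y + \<delta> *\<^sub>R (Xs - Xb)) \<in> feas A a B b"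
proof -
  define D where "D = Y + \<delta> *\<^sub>R (Xs - Xb)"
  have Xbpsd: "psd Xb" and XbA: "A Xb = a" and XbB: "\<And>i. B Xb $ i \<le> b $ i"
    using XbF by (auto simp: feas_def)
  have Xspsd: "psd Xs" and XsA: "A Xs = a" and XsB: "\<And>i. B Xs $ i \<le> b $ i"
    using XsF by (auto simp: feas_def)
  obtain \<mu> where mu: "\<mu> > 0" "\<forall>v. \<mu> * (v \<bullet> v) \<le> v \<bullet> (Xs *v v)"
    using pd_bound[OF Xspd] by blast
  obtain c where c: "c \<ge> 0" "\<forall>v. (M *v v) \<bullet> (Xb *v (M *v v)) \<le> c * (v \<bullet> v)"
    using quad_bound[of M Xb] by blast
  have ev1: "\<forall>\<^sub>F \<epsilon> in at_right 0. (0::real) < \<epsilon>" by (rule eventually_at_right_less)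
  have ev2: "\<forall>\<^sub>F \<epsilon> in at_right 0. 0 < 1 - \<epsilon> * \<delta>"
  proof -
    have "((\<lambda>\<epsilon>. 1 - \<epsilon> * \<delta>) \<longlongrightarrow> 1 - 0 * \<delta>) (at_right (0::real))"
      by (intro tendsto_intros)
    then show ?thesis by (rule order_tendstoD(1)) simp
  qed
  have ev3: "\<forall>\<^sub>F \<epsilon> in at_right 0. 0 < (1 - \<epsilon> * \<delta>) * \<delta> * \<mu> - \<epsilon> * c"
  proof -
    have "((\<lambda>\<epsilon>. (1 - \<epsilon> * \<delta>) * \<delta> * \<mu> - \<epsilon> * c) \<longlongrightarrow> (1 - 0 * \<delta>) * \<delta> * \<mu> - 0 * c) (at_right (0::real))"
      by (intro tendsto_intros)
    then show ?thesis by (rule order_tendstoD(1)) (use d mu in simp)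
  qed
  have ev4: "\<forall>\<^sub>F \<epsilon> in at_right 0. \<forall>i. B (Xb + \<epsilon> *\<^sub>R D) $ i \<le> b $ i"
  proof (rule eventually_all_finite)
    fix i
    have lin: "B (Xb + \<epsilon> *\<^sub>R D) $ i = B Xb $ i + \<epsilon> * B D $ i" for \<epsilon>
      using linB by (simp add: linear_add linear_scale)
    show "\<forall>\<^sub>F \<epsilon> in at_right 0. B (Xb + \<epsilon> *\<^sub>R D) $ i \<le> b $ i"
    proof (cases "B Xb $ i = b $ i")
      case True
      have "B D $ i = \<delta> * (B Xs $ i - B Xb $ i)"
        using linB BY[OF True] by (simp add: D_def linear_add linear_scale linear_diff)
      then have BD: "B D $ i \<le> 0" using XsB[of i] True d by (simp add: mult_le_0_iff)
      show ?thesis using ev1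
        by (rule eventually_mono) (use BD in \<open>simp add: lin True mult_le_0_iff\<close>)
    next
      case False
      then have lt: "B Xb $ i < b $ i" using XbB[of i] by simp
      have "((\<lambda>\<epsilon>. B Xb $ i + \<epsilon> * B D $ i) \<longlongrightarrow> B Xb $ i + 0 * B D $ i) (at_right (0::real))"
        by (intro tendsto_intros)
      then have "\<forall>\<^sub>F \<epsilon> in at_right 0. B Xb $ i + \<epsilon> * B D $ i < b $ i"
        by (rule order_tendstoD(2)) (use lt in simp)
      then show ?thesis by (rule eventually_mono) (simp add: lin)
    qed
  qed
  have "\<forall>\<^sub>F \<epsilon> in at_right 0. 0 < \<epsilon> \<and> 0 < 1 - \<epsilon> * \<delta> \<and> 0 < (1 - \<epsilon> * \<delta>) * \<delta> * \<mu> - \<epsilon> * c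
        \<and> (\<forall>i. B (Xb + \<epsilon> *\<^sub>R D) $ i \<le> b $ i)"
    using ev1 ev2 ev3 ev4 by eventually_elim blast
  then have "\<exists>\<epsilon>. 0 < \<epsilon> \<and> 0 < 1 - \<epsilon> * \<delta> \<and> 0 < (1 - \<epsilon> * \<delta>) * \<delta> * \<mu> - \<epsilon> * c
        \<and> (\<forall>i. B (Xb + \<epsilon> *\<^sub>R D) $ i \<le> b $ i)"
    using eventually_happens trivial_limit_at_right_real unfolding trivial_limit_def by blast
  then obtain \<epsilon> where e: "0 < \<epsilon>" "0 < 1 - \<epsilon> * \<delta>" "0 < (1 - \<epsilon> * \<delta>) * \<delta> * \<mu> - \<epsilon> * c"
    "\<forall>i. B (Xb + \<epsilon> *\<^sub>R D) $ i \<le> b $ i"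
    by blast
  have psdX: "psd (Xb + \<epsilon> *\<^sub>R D)"
    unfolding psd_def
  proof
    show "Xb + \<epsilon> *\<^sub>R D \<in> symm"
      using subspace_symm Xbpsd Xspsd Ys unfolding D_def psd_def
      by (meson subspace_add subspace_scale subspace_diff)
    show "\<forall>v. 0 \<le> v \<bullet> ((Xb + \<epsilon> *\<^sub>R D) *v v)"
      using psd_comb[OF Xbpsd mu(2) c(2) e(1) d e(2)] e(3) unfolding D_def YT by simp
  qed
  have "A (Xb + \<epsilon> *\<^sub>R D) = a"
    using linA by (simp add: D_def linear_add linear_scale linear_diff AY XbA XsA)
  then have "Xb + \<epsilon> *\<^sub>R D \<in> feas A a B b" using psdX e(4) by (simp add: feas_def)
  then show ?thesis using e(1) unfolding D_def by blast
qed

lemma normal_le: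
  fixes A :: "real^'n^'n \<Rightarrow> real^'p" and B :: "real^'n^'n \<Rightarrow> real^'q"
  assumes linA: "linear A" and linB: "linear B"
    and XsF: "Xs \<in> feas A a B b" and Xspd: "pd Xs" and XbF: "Xb \<in> feas A a B b"
    and Ys: "Y \<in> symm" and YT: "Y = Xb ** M + transpose M ** Xb"
    and AY: "A Y = 0" and BY: "\<And>i. B Xb $ i = b $ i \<Longrightarrow> B Y $ i = 0"
    and C: "C \<in> normal_cone (feas A a B b) Xb"
  shows "C \<bullet> Y \<le> 0"
proof -
  have Cs: "C \<in> symm" and Cle: "\<And>X. X \<in> feas A a B b \<Longrightarrow> C \<bullet> X \<le> C \<bullet> Xb"
    using C by (auto simp: normal_cone_def tr_inner_symm)
  define d where "d = C \<bullet> (Xs - Xb)"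
  have d0: "d \<le> 0" using Cle[OF XsF] by (simp add: d_def inner_diff_right)
  have step: "C \<bullet> Y + \<delta> * d \<le> 0" if dp: "\<delta> > 0" for \<delta>
  proof -
    obtain \<epsilon> where e: "\<epsilon> > 0" "Xb + \<epsilon> *\<^sub>R (Y + \<delta> *\<^sub>R (Xs - Xb)) \<in> feas A a B b"
      using feas_dir[OF linA linB XsF Xspd XbF Ys YT AY BY dp] by blast
    have "C \<bullet> (Xb + \<epsilon> *\<^sub>R (Y + \<delta> *\<^sub>R (Xs - Xb))) \<le> C \<bullet> Xb" using Cle[OF e(2)] .
    then have "\<epsilon> * (C \<bullet> Y + \<delta> * d) \<le> 0"
      by (simp add: inner_add_right d_def algebra_simps)
    then show ?thesis using e(1) by (simp add: mult_le_0_iff)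
  qed
  show ?thesis
  proof (cases "d = 0")
    case True then show ?thesis using step[of 1] by simp
  next
    case False
    then have dn: "d < 0" using d0 by simp
    show ?thesis
    proof (rule field_le_epsilon)
      fix e :: real assume "e > 0"
      then have "C \<bullet> Y + (e / (-d)) * d \<le> 0" using dn \<open>e > 0\<close> by (intro step) (simp add: divide_pos_neg)
      then show "C \<bullet> Y \<le> 0 + e" using dn by simp
    qed
  qed
qed



lemma orth_set_eq:
  fixes A :: "real^'n^'n \<Rightarrow> real^'p" and B :: "real^'n^'n \<Rightarrow> real^'q"
  assumes linA: "linear A" and linB: "linear B"
    and slater: "\<exists>X\<in>feas A a B b. pd X"
    and XbF: "Xb \<in> feas A a B b"
  shows "{Y \<in> symm. \<forall>C\<in>span (normal_cone (feas A a B b) Xb). orthogonal C Y} =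
         {X \<in> symm. A X = 0}
                \<inter> {X \<in> symm. orth_proj {z. supp z \<inter> supp (B Xb - b) = {}} (B X) = 0}
                \<inter> span {(1/2) *\<^sub>R (Xb ** outer u v + outer v u ** Xb) | u v. True}"
  (is "?L = ?R")
proof -
  let ?N = "normal_cone (feas A a B b) Xb"
  obtain Xs where XsF: "Xs \<in> feas A a B b" and Xspd: "pd Xs" using slater by blast
  have Xbpsd: "psd Xb" and XbA: "A Xb = a" and XbB: "\<And>i. B Xb $ i \<le> b $ i"
    using XbF by (auto simp: feas_def)
  have Xbs: "Xb \<in> symm" using Xbpsd by (simp add: psd_def)
  have Fsymm: "X \<in> symm" if "X \<in> feas A a B b" for X
    using that by (simp add: feas_def psd_def)
  have act: "orth_proj {z. supp z \<inter> supp (B Xb - b) = {}} (B X) = 0 \<longleftrightarrow>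
       (\<forall>i. B Xb $ i = b $ i \<longrightarrow> B X $ i = 0)" for X
    by (simp add: orth_proj_zero_iff)
  show ?thesis
  proof
    show "?L \<subseteq> ?R"
    proof
      fix Y assume "Y \<in> ?L"
      then have Ys: "Y \<in> symm" and orthN: "\<And>C. C \<in> ?N \<Longrightarrow> C \<bullet> Y = 0"
        by (auto simp: orthogonal_def span_base)
      have AY: "A Y = 0"
      proof (subst vec_eq_iff, intro allI)
        fix i
        have sp: "sadj A i \<in> symm" "\<forall>X\<in>symm. sadj A i \<bullet> X = A X $ i" using sadj_prop[OF linA] by auto
        have "sadj A i \<in> ?N"
          unfolding normal_cone_def using sp XbF Fsymm Xbs
          by (auto simp: tr_inner_symm feas_def)
        then have "sadj A i \<bullet> Y = 0" by (rule orthN)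
        then show "A Y $ i = 0 $ i" using sp Ys by simp
      qed
      have BY: "B Y $ i = 0" if ai: "B Xb $ i = b $ i" for i
      proof -
        have sp: "sadj B i \<in> symm" "\<forall>X\<in>symm. sadj B i \<bullet> X = B X $ i" using sadj_prop[OF linB] by auto
        have "sadj B i \<in> ?N"
          unfolding normal_cone_def using sp XbF Fsymm Xbs ai
          by (auto simp: tr_inner_symm feas_def)
        then have "sadj B i \<bullet> Y = 0" by (rule orthN)
        then show "B Y $ i = 0" using sp Ys by simp
      qed
      have Q: "w \<bullet> (Y *v w) = 0" if w: "Xb *v w = 0" for w
      proof -
        have "- outer w w \<in> symm" using outer_symm subspace_symm by (metis subspace_neg)
        moreover have "tr_inner (- outer w w) X \<le> tr_inner (- outer w w) Xb" if "X \<in> feas A a B b" for X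
        proof -
          have "psd X" using that by (simp add: feas_def)
          then have "0 \<le> w \<bullet> (X *v w)" by (simp add: psd_def)
          then show ?thesis using \<open>- outer w w \<in> symm\<close> w
            by (simp add: tr_inner_symm outer_inner)
        qed
        ultimately have "- outer w w \<in> ?N" by (simp add: normal_cone_def)
        then have "(- outer w w) \<bullet> Y = 0" by (rule orthN)
        then show ?thesis by (simp add: outer_inner)
      qed
      have "Y \<in> Tset Xb" by (rule tangent_char[OF Xbs Ys Q])
      then show "Y \<in> ?R" using Ys AY BY span_gen_eq[of Xb] by (auto simp: act)
    qed
  next
    show "?R \<subseteq> ?L"
    proof
      fix Y assume Y: "Y \<in> ?R"
      then have Ys: "Y \<in> symm" and AY: "A Y = 0" and BY: "\<And>i. B Xb $ i = b $ i \<Longrightarrow> B Y $ i = 0"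
        and YT: "Y \<in> Tset Xb"
        using span_gen_eq[of Xb] by (auto simp: act)
      obtain M where M: "Y = Xb ** M + transpose M ** Xb" using YT by (auto simp: Tset_def)
      have M': "(-1) *\<^sub>R Y = Xb ** ((-1) *\<^sub>R M) + transpose ((-1) *\<^sub>R M) ** Xb"
        by (simp only: M mm_scale_r mm_scale_l transpose_scalar scaleR_right_distrib)
      have Ys': "(-1) *\<^sub>R Y \<in> symm" using Ys subspace_symm by (metis subspace_scale)
      have AY': "A ((-1) *\<^sub>R Y) = 0" using AY linA by (simp only: linear_scale scaleR_zero_right)
      have BY': "B ((-1) *\<^sub>R Y) $ i = 0" if "B Xb $ i = b $ i" for i
        using BY[OF that] linB by (simp only: linear_scale vector_scaleR_component mult_zero_right scaleR_zero_right)
      have z: "C \<bullet> Y = 0" if C: "C \<in> ?N" for C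
      proof -
        have "C \<bullet> Y \<le> 0"
          by (rule normal_le[OF linA linB XsF Xspd XbF Ys M AY BY C])
        moreover have "C \<bullet> ((-1) *\<^sub>R Y) \<le> 0"
          by (rule normal_le[OF linA linB XsF Xspd XbF Ys' M' AY' BY' C])
        ultimately show ?thesis by simp
      qed
      have "\<forall>C\<in>span ?N. orthogonal C Y"
      proof
        fix C assume "C \<in> span ?N"
        then show "orthogonal C Y"
        proof (rule span_induct)
          show "subspace {C. orthogonal C Y}"
            unfolding subspace_def orthogonal_def by (simp add: inner_add_left)
          show "\<And>x. x \<in> ?N \<Longrightarrow> orthogonal x Y"
            using z by (simp add: orthogonal_def)
        qed
      qed
      then show "Y \<in> ?L" using Ys by blast
    qed
  qed
qed



lemma part1:
  fixes A :: "real^'n^'n \<Rightarrow> real^'p" and B :: "real^'n^'n \<Rightarrow> real^'q"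
  assumes linA: "linear A" and linB: "linear B"
    and slater: "\<exists>X\<in>feas A a B b. pd X"
    and XbF: "Xb \<in> feas A a B b"
  shows "dim (normal_cone (feas A a B b) Xb) =
           dim (symm :: (real^'n^'n) set) -
           dim ({X \<in> symm. A X = 0}
                \<inter> {X \<in> symm. orth_proj {z. supp z \<inter> supp (B Xb - b) = {}} (B X) = 0}
                \<inter> span {(1/2) *\<^sub>R (Xb ** outer u v + outer v u ** Xb) | u v. True})"
proof -
  let ?N = "normal_cone (feas A a B b) Xb"
  have "?N \<subseteq> symm" by (auto simp: normal_cone_def)
  then have sub: "span ?N \<subseteq> symm" using subspace_symm by (rule span_minimal)
  have "dim {y \<in> symm. \<forall>x\<in>span ?N. orthogonal x y} + dim (span ?N) = dim (symm :: (real^'n^'n) set)"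
    by (rule dim_subspace_orthogonal_to_vectors[OF subspace_span subspace_symm sub])
  then show ?thesis unfolding orth_set_eq[OF linA linB slater XbF] dim_span by simp
qed

definition phi :: "real^'n \<Rightarrow> real^'n \<Rightarrow> real^'n^'n" where
  "phi x w = outer x w + outer w x"

lemma linear_phi: "linear (phi x)"
  by (rule linearI) (simp_all add: phi_def outer_def vec_eq_iff algebra_simps)

lemma outer_mv: "outer u v *v x = (v \<bullet> x) *\<^sub>R u"
  by (simp add: outer_def matrix_vector_mult_def vec_eq_iff inner_vec_def sum_distrib_left ac_simps)

lemma phi_inj: assumes "x \<noteq> 0" shows "inj (phi x)"
proof -
  have z: "w = 0" if "phi x w = 0" for w
  proof -
    have "phi x w *v x = 0" using that by simp
    then have e: "(w \<bullet> x) *\<^sub>R x + (x \<bullet> x) *\<^sub>R w = 0"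
      by (simp add: phi_def matrix_vector_mult_add_rdistrib outer_mv)
    then have "x \<bullet> ((w \<bullet> x) *\<^sub>R x + (x \<bullet> x) *\<^sub>R w) = 0" by simp
    then have "2 * (w \<bullet> x) * (x \<bullet> x) = 0" by (simp add: inner_add_right inner_commute algebra_simps)
    then have "w \<bullet> x = 0" using assms by simp
    then show "w = 0" using e assms by simp
  qed
  show ?thesis
  proof (rule injI)
    fix w1 w2 assume "phi x w1 = phi x w2"
    then have "phi x (w1 - w2) = 0" using linear_phi[of x] by (simp add: linear_diff)
    then show "w1 = w2" using z[of "w1 - w2"] by simp
  qed
qed

lemma Tset_outer: fixes x :: "real^'n" assumes "x \<noteq> 0" shows "Tset (outer x x) = range (phi x)"
proof -
  have l: "outer x x ** M = outer x (transpose M *v x)" for M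
    by (simp add: outer_def matrix_matrix_mult_def vec_eq_iff matrix_vector_mult_def transpose_def
        sum_distrib_left ac_simps)
  have r: "transpose M ** outer x x = outer (transpose M *v x) x" for M
    by (simp add: outer_def matrix_matrix_mult_def vec_eq_iff matrix_vector_mult_def transpose_def
        sum_distrib_left sum_distrib_right ac_simps)
  have "\<exists>M. transpose M *v x = w" for w :: "real^'n"
  proof
    have "x \<bullet> x \<noteq> 0" using assms by simp
    then show "transpose ((1 / (x \<bullet> x)) *\<^sub>R outer x w) *v x = w"
      by (simp add: transpose_scalar transpose_outer scaleR_matrix_vector_assoc[symmetric] outer_mv)
  qed
  then show ?thesis unfolding Tset_def phi_def using l r by (auto simp: image_def) metis
qed

lemma phi_symm: "phi x w \<in> symm"
  by (rule symmI) (simp add: phi_def outer_def)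

lemma sadj_phi:
  assumes "linear A"
  shows "A (phi x w) $ i = 2 * ((sadj A i *v x) \<bullet> w)"
proof -
  have sp: "sadj A i \<in> symm" "\<forall>X\<in>symm. sadj A i \<bullet> X = A X $ i" using sadj_prop[OF assms] by auto
  have "A (phi x w) $ i = sadj A i \<bullet> phi x w" using sp(2) phi_symm[of x w] by simp
  also have "\<dots> = x \<bullet> (sadj A i *v w) + w \<bullet> (sadj A i *v x)"
    by (simp add: phi_def inner_add_right inner_commute[of "sadj A i"] outer_inner)
  also have "x \<bullet> (sadj A i *v w) = w \<bullet> (sadj A i *v x)" by (rule symm_mv[OF sp(1)])
  finally show ?thesis by (simp add: inner_commute)
qed



lemma orth_compl_zero_iff:
  fixes W :: "(real^'n) set"
  shows "orth_compl W \<subseteq> {0} \<longleftrightarrow> span W = UNIV"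
proof
  assume h: "orth_compl W \<subseteq> {0}"
  show "span W = UNIV"
  proof (rule set_eqI, rule iffI)
    fix v :: "real^'n"
    obtain y z where yz: "y \<in> span W" "\<And>w. w \<in> span W \<Longrightarrow> orthogonal z w" "v = y + z"
      using orthogonal_subspace_decomp_exists[of W v] by blast
    have "z \<in> orth_compl W" using yz(2) span_base
      by (fastforce simp: orth_compl_def orthogonal_def inner_commute)
    then have "z = 0" using h by blast
    then show "v \<in> span W" using yz by simp
  qed simp
next
  assume h: "span W = UNIV"
  show "orth_compl W \<subseteq> {0}"
  proof
    fix y assume y: "y \<in> orth_compl W"
    have "y \<in> span W" using h by simp
    then have "orthogonal y y"
    proof (rule span_induct[where P="\<lambda>C. orthogonal C y"])
      show "subspace {C. orthogonal C y}"
        unfolding subspace_def orthogonal_def by (simp add: inner_add_left)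
      show "\<And>x. x \<in> W \<Longrightarrow> orthogonal x y" using y by (simp add: orth_compl_def orthogonal_def)
    qed
    then show "y \<in> {0}" by (simp add: orthogonal_def)
  qed
qed

lemma part2_set:
  fixes A :: "real^'n^'n \<Rightarrow> real^'p" and B :: "real^'n^'n \<Rightarrow> real^'q" and x :: "real^'n"
  assumes linA: "linear A" and linB: "linear B" and x: "x \<noteq> 0"
  shows "{X \<in> symm. A X = 0}
                \<inter> {X \<in> symm. orth_proj {z. supp z \<inter> supp (B (outer x x) - b) = {}} (B X) = 0}
                \<inter> span {(1/2) *\<^sub>R (outer x x ** outer u v + outer v u ** outer x x) | u v. True}
       = phi x ` orth_compl ({sadj A i *v x | i. True}
                    \<union> {sadj B i *v x | i. i \<notin> supp (B (outer x x) - b)})"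
  (is "?K1 \<inter> ?K2 \<inter> ?S = phi x ` orth_compl ?W")
proof -
  have S: "?S = range (phi x)" using span_gen_eq[of "outer x x"] Tset_outer[OF x] by simp
  have key: "phi x w \<in> ?K1 \<inter> ?K2 \<longleftrightarrow> w \<in> orth_compl ?W" for w
  proof -
    have "phi x w \<in> ?K1 \<longleftrightarrow> (\<forall>i. (sadj A i *v x) \<bullet> w = 0)"
      using phi_symm[of x w] by (simp add: vec_eq_iff sadj_phi[OF linA])
    moreover have "phi x w \<in> ?K2 \<longleftrightarrow> (\<forall>i. i \<notin> supp (B (outer x x) - b) \<longrightarrow> (sadj B i *v x) \<bullet> w = 0)"
      using phi_symm[of x w] by (simp only: orth_proj_zero_iff) (auto simp: supp_def sadj_phi[OF linB])
    moreover have "w \<in> orth_compl ?W \<longleftrightarrow> (\<forall>i. (sadj A i *v x) \<bullet> w = 0) \<and>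
        (\<forall>i. i \<notin> supp (B (outer x x) - b) \<longrightarrow> (sadj B i *v x) \<bullet> w = 0)"
      by (auto simp: orth_compl_def)
    ultimately show ?thesis by blast
  qed
  show ?thesis
  proof
    show "?K1 \<inter> ?K2 \<inter> ?S \<subseteq> phi x ` orth_compl ?W"
    proof
      fix X assume X: "X \<in> ?K1 \<inter> ?K2 \<inter> ?S"
      then obtain w where w: "X = phi x w" using S by auto
      then have "w \<in> orth_compl ?W" using key X by blast
      then show "X \<in> phi x ` orth_compl ?W" using w by blast
    qed
    show "phi x ` orth_compl ?W \<subseteq> ?K1 \<inter> ?K2 \<inter> ?S"
      using key S by blast
  qed
qed



lemma dim_symm_pos: "dim (symm :: (real^'n^'n) set) > 0"
proof -
  have "mat 1 \<in> (symm :: (real^'n^'n) set)" by (rule symmI) (simp add: mat_def)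
  moreover have "(mat 1 :: real^'n^'n) \<noteq> 0"
  proof
    assume "(mat 1 :: real^'n^'n) = 0"
    then have "(mat 1 :: real^'n^'n) *v axis undefined 1 = 0" by simp
    then show False by simp
  qed
  ultimately have "\<not> symm \<subseteq> {0::real^'n^'n}" by blast
  then show ?thesis using dim_eq_0 by (metis gr0I)
qed

theorem theorem2p9:
  fixes A :: "real^'n^'n \<Rightarrow> real^'p" and B :: "real^'n^'n \<Rightarrow> real^'q"
    and a :: "real^'p" and b :: "real^'q" and Xb :: "real^'n^'n"
  assumes "linear A" and "linear B"
    and slater: "\<exists>X\<in>feas A a B b. pd X"
    and Xb: "Xb \<in> feas A a B b"
  shows "dim (normal_cone (feas A a B b) Xb) =
           dim (symm :: (real^'n^'n) set) -
           dim ({X \<in> symm. A X = 0}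
                \<inter> {X \<in> symm. orth_proj {z. supp z \<inter> supp (B Xb - b) = {}} (B X) = 0}
                \<inter> span {(1/2) *\<^sub>R (Xb ** outer u v + outer v u ** Xb) | u v. True})
         \<and> (\<forall>x. x \<noteq> 0 \<longrightarrow> Xb = outer x x \<longrightarrow>
           (let W = {sadj A i *v x | i. True}
                    \<union> {sadj B i *v x | i. i \<notin> supp (B (outer x x) - b)}
            in dim (normal_cone (feas A a B b) (outer x x)) =
                 dim (symm :: (real^'n^'n) set) - dim (orth_compl W)
               \<and> (is_vertex (feas A a B b) (outer x x) \<longleftrightarrow> span W = UNIV)))"
proof (intro conjI allI impI)
  show P1: "dim (normal_cone (feas A a B b) Xb) =
           dim (symm :: (real^'n^'n) set) -
           dim ({X \<in> symm. A X = 0}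
                \<inter> {X \<in> symm. orth_proj {z. supp z \<inter> supp (B Xb - b) = {}} (B X) = 0}
                \<inter> span {(1/2) *\<^sub>R (Xb ** outer u v + outer v u ** Xb) | u v. True})"
    by (rule part1[OF assms])
  fix x :: "real^'n"
  assume x: "x \<noteq> 0" and Xbx: "Xb = outer x x"
  define W where "W = {sadj A i *v x | i. True} \<union> {sadj B i *v x | i. i \<notin> supp (B (outer x x) - b)}"
  have dW: "dim (phi x ` orth_compl W) = dim (orth_compl W)"
    using phi_inj[OF x] by (intro eucl.dim_image_eq linear_phi) (auto intro: inj_on_subset)
  have D: "dim (normal_cone (feas A a B b) (outer x x)) =
                 dim (symm :: (real^'n^'n) set) - dim (orth_compl W)"
    using P1 part2_set[OF assms(1,2) x, of b] dW unfolding Xbx W_def by simp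
  have V: "is_vertex (feas A a B b) (outer x x) \<longleftrightarrow> span W = UNIV"
  proof -
    have "is_vertex (feas A a B b) (outer x x) \<longleftrightarrow>
          dim (symm :: (real^'n^'n) set) - dim (orth_compl W) = dim (symm :: (real^'n^'n) set)"
      using Xb Xbx D by (simp add: is_vertex_def)
    also have "\<dots> \<longleftrightarrow> dim (orth_compl W) = 0" using dim_symm_pos[where 'n='n] by linarith
    also have "\<dots> \<longleftrightarrow> span W = UNIV" by (simp add: orth_compl_zero_iff)
    finally show ?thesis .
  qed
  show "let W = {sadj A i *v x | i. True}
                    \<union> {sadj B i *v x | i. i \<notin> supp (B (outer x x) - b)}
            in dim (normal_cone (feas A a B b) (outer x x)) =
                 dim (symm :: (real^'n^'n) set) - dim (orth_compl W)
               \<and> (is_vertex (feas A a B b) (outer x x) \<longleftrightarrow> span W = UNIV)"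
    unfolding Let_def W_def[symmetric] using D V by blast
qed

end
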